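(* Let $n\ge3$ and consider the scoring two-player Tower of Hanoi game on three pegs with real weights $w_{12},w_{13},w_{23}$, under any of the ending conditions (EC1)–(EC5). Then the first player wins, except in the case $w_{12}=w_{13}=w_{23}\le 0$, in which the game is a draw.
   Context: Tower of Hanoi on three pegs (labeled 1, 2, 3) with $n$ disks of pairwise distinct sizes: a position assigns each disk to a peg, disks on each peg stacked with sizes decreasing from bottom to top. A legal move transfers the top disk of one peg to a different peg that is empty or has a larger top disk; a move from Peg $i$ to Peg $j$ or from Peg $j$ to Peg $i$ is a move along edge $\{i,j\}$. A tower position is one with all disks on one peg. Two-player game: Anh (first player) and Bao (second player) alternate moves starting from the position with all disks on Peg 1; a player may not move the disk that the opponent moved in the immediately preceding move. The game ends when the tower has been transferred to a final peg, according to one fixed ending condition: (EC1) all disks on a given peg distinct from Peg 1; (EC2) all disks on Peg 1, the largest disk having been moved at least once; (EC3) all disks on Peg 1, the smallest disk having been moved at least once; (EC4) all disks on any peg, the largest disk having been moved at least once; (EC5) all disks on any peg, the smallest disk having been moved at least once. A move creating a tower position that does not end the game (tower on a non-final peg) is not allowed. Scoring play: real weights $w_{12},w_{13},w_{23}$ are given (with $w_{ij}=w_{ji}$); a player making a move along edge $\{i,j\}$ earns $w_{ij}$ points. When the game ends, the player with strictly more points wins, and equal points is a tie. A player "wins" the game if she/he has a strategy forcing the game to end with her/his victory; if neither player can force the game to terminate in a victory for her/himself, the game is a draw. *)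

theory Defs
  imports Complex_Main
begin

(* Disks are 0..n-1, disk i has size i (0 = smallest, n-1 = largest).
   Pegs are the natural numbers 1, 2, 3.
   A position is a list p of length n, p ! i = peg carrying disk i;
   the stacking order on each peg is forced by the sizes. *)

type_synonym pos = "nat list"

datatype ending = EC1 nat | EC2 | EC3 | EC4 | EC5

record gstate =
  gpos :: pos
  glast :: "nat option"  (* disk moved in the immediately preceding move *)
  gbig :: bool           (* largest disk has been moved at least once *)
  gsmall :: bool         (* smallest disk has been moved at least once *)
  gdiff :: real          (* points of Anh minus points of Bao *)
  ganh :: bool           (* True iff it is Anh's turn *)

definition peg :: "nat \<Rightarrow> bool" where
  "peg k \<longleftrightarrow> k \<in> {1,2,3}"

definition weight :: "real \<Rightarrow> real \<Rightarrow> real \<Rightarrow> nat \<Rightarrow> nat \<Rightarrow> real" where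
  "weight w12 w13 w23 i j =
     (if {i,j} = {1,2} then w12 else if {i,j} = {1,3} then w13 else w23)"

definition tower :: "nat \<Rightarrow> pos \<Rightarrow> nat \<Rightarrow> bool" where
  "tower n p k \<longleftrightarrow> (\<forall>e<n. p ! e = k)"

definition legal_move :: "nat \<Rightarrow> pos \<Rightarrow> nat \<Rightarrow> nat \<Rightarrow> bool" where
  "legal_move n p d j \<longleftrightarrow>
     d < n \<and> peg j \<and> j \<noteq> p ! d \<and>
     (\<forall>e<n. p ! e = p ! d \<longrightarrow> d \<le> e) \<and>
     (\<forall>e<n. p ! e = j \<longrightarrow> d < e)"

definition move_pos :: "pos \<Rightarrow> nat \<Rightarrow> nat \<Rightarrow> pos" where
  "move_pos p d j = p[d := j]"

definition game_over :: "nat \<Rightarrow> ending \<Rightarrow> pos \<Rightarrow> bool \<Rightarrow> bool \<Rightarrow> bool" where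
  "game_over n ec p big small =
     (case ec of
        EC1 f \<Rightarrow> tower n p f
      | EC2 \<Rightarrow> tower n p 1 \<and> big
      | EC3 \<Rightarrow> tower n p 1 \<and> small
      | EC4 \<Rightarrow> (\<exists>k. peg k \<and> tower n p k) \<and> big
      | EC5 \<Rightarrow> (\<exists>k. peg k \<and> tower n p k) \<and> small)"

definition step :: "nat \<Rightarrow> real \<Rightarrow> real \<Rightarrow> real \<Rightarrow> gstate \<Rightarrow> nat \<Rightarrow> nat \<Rightarrow> gstate" where
  "step n w12 w13 w23 s d j =
     \<lparr> gpos = move_pos (gpos s) d j,
       glast = Some d,
       gbig = (gbig s \<or> d = n - 1),
       gsmall = (gsmall s \<or> d = 0),
       gdiff = (if ganh s then gdiff s + weight w12 w13 w23 (gpos s ! d) j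
                else gdiff s - weight w12 w13 w23 (gpos s ! d) j),
       ganh = (\<not> ganh s) \<rparr>"

definition ends_after :: "nat \<Rightarrow> ending \<Rightarrow> real \<Rightarrow> real \<Rightarrow> real \<Rightarrow> gstate \<Rightarrow> nat \<Rightarrow> nat \<Rightarrow> bool" where
  "ends_after n ec w12 w13 w23 s d j =
     (let s' = step n w12 w13 w23 s d j in game_over n ec (gpos s') (gbig s') (gsmall s'))"

definition allowed :: "nat \<Rightarrow> ending \<Rightarrow> real \<Rightarrow> real \<Rightarrow> real \<Rightarrow> gstate \<Rightarrow> nat \<Rightarrow> nat \<Rightarrow> bool" where
  "allowed n ec w12 w13 w23 s d j \<longleftrightarrow>
     legal_move n (gpos s) d j \<and> glast s \<noteq> Some d \<and>
     ((\<exists>k. peg k \<and> tower n (move_pos (gpos s) d j) k) \<longrightarrow> ends_after n ec w12 w13 w23 s d j)"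

(* player pl (True = Anh, False = Bao) is the strict winner given score difference x *)
definition victor :: "bool \<Rightarrow> real \<Rightarrow> bool" where
  "victor pl x \<longleftrightarrow> (if pl then x > 0 else x < 0)"

inductive wins :: "nat \<Rightarrow> ending \<Rightarrow> real \<Rightarrow> real \<Rightarrow> real \<Rightarrow> bool \<Rightarrow> gstate \<Rightarrow> bool"
  for n ec w12 w13 w23 pl where
  own_turn:
    "\<lbrakk> ganh s = pl;
       allowed n ec w12 w13 w23 s d j;
       (ends_after n ec w12 w13 w23 s d j \<and> victor pl (gdiff (step n w12 w13 w23 s d j))) \<or>
       (\<not> ends_after n ec w12 w13 w23 s d j \<and> wins n ec w12 w13 w23 pl (step n w12 w13 w23 s d j)) \<rbrakk>
     \<Longrightarrow> wins n ec w12 w13 w23 pl s"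
| opp_turn:
    "\<lbrakk> ganh s \<noteq> pl;
       \<exists>d j. allowed n ec w12 w13 w23 s d j;
       \<forall>d j. allowed n ec w12 w13 w23 s d j \<longrightarrow>
         (ends_after n ec w12 w13 w23 s d j \<and> victor pl (gdiff (step n w12 w13 w23 s d j))) \<or>
         (\<not> ends_after n ec w12 w13 w23 s d j \<and> wins n ec w12 w13 w23 pl (step n w12 w13 w23 s d j)) \<rbrakk>
     \<Longrightarrow> wins n ec w12 w13 w23 pl s"

definition initial :: "nat \<Rightarrow> gstate" where
  "initial n = \<lparr> gpos = replicate n 1, glast = None, gbig = False, gsmall = False,
                 gdiff = 0, ganh = True \<rparr>"

definition valid_ending :: "ending \<Rightarrow> bool" where
  "valid_ending ec \<longleftrightarrow> (case ec of EC1 f \<Rightarrow> f \<in> {2,3} | _ \<Rightarrow> True)"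

definition anh_wins where "anh_wins n ec w12 w13 w23 = wins n ec w12 w13 w23 True (initial n)"
definition bao_wins where "bao_wins n ec w12 w13 w23 = wins n ec w12 w13 w23 False (initial n)"
definition is_draw where
  "is_draw n ec w12 w13 w23 \<longleftrightarrow> \<not> anh_wins n ec w12 w13 w23 \<and> \<not> bao_wins n ec w12 w13 w23"

end

theory Submission
  imports Defs
begin


definition mk :: "pos \<Rightarrow> nat option \<Rightarrow> bool \<Rightarrow> bool \<Rightarrow> real \<Rightarrow> bool \<Rightarrow> gstate" where
  "mk p l b s d a = \<lparr>gpos=p, glast=l, gbig=b, gsmall=s, gdiff=d, ganh=a\<rparr>"

definition valid :: "nat \<Rightarrow> pos \<Rightarrow> bool" where
  "valid n p \<longleftrightarrow> length p = n \<and> (\<forall>e<n. peg (p ! e))"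

lemma mk_sel[simp]: "gpos (mk p l b s d a) = p" "glast (mk p l b s d a) = l" "gbig (mk p l b s d a) = b"
  "gsmall (mk p l b s d a) = s" "gdiff (mk p l b s d a) = d" "ganh (mk p l b s d a) = a"
  by (simp_all add: mk_def)

lemma step_mk: "step n w12 w13 w23 (mk p l b s d a) e j =
   mk (p[e := j]) (Some e) (b \<or> e = n - 1) (s \<or> e = 0)
      (if a then d + weight w12 w13 w23 (p ! e) j else d - weight w12 w13 w23 (p ! e) j) (\<not> a)"
  by (simp add: step_def mk_def move_pos_def)

lemma weight_simps[simp]:
  "weight w12 w13 w23 1 2 = w12" "weight w12 w13 w23 2 1 = w12"
  "weight w12 w13 w23 1 3 = w13" "weight w12 w13 w23 3 1 = w13"
  "weight w12 w13 w23 2 3 = w23" "weight w12 w13 w23 3 2 = w23"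
  by (auto simp: weight_def doubleton_eq_iff)

lemma weight_const: "weight w w w i j = w" by (simp add: weight_def)

lemma legal_unique:
  assumes "valid n p" "legal_move n p d j" "legal_move n p d' j'" "d \<noteq> 0" "d' \<noteq> 0"
  shows "d = d' \<and> j = j'"
proof -
  have n: "0 < n" and dn: "d < n" "d' < n" using assms(2,3) by (auto simp: legal_move_def)
  have pg: "peg (p!0)" "peg (p!d)" "peg (p!d')" using assms(1) n dn by (auto simp: valid_def)
  have L1: "\<forall>e<n. p ! e = p ! d \<longrightarrow> d \<le> e" "\<forall>e<n. p ! e = j \<longrightarrow> d < e" "peg j" "j \<noteq> p!d"
    using assms(2) by (simp_all add: legal_move_def)
  have L2: "\<forall>e<n. p ! e = p ! d' \<longrightarrow> d' \<le> e" "\<forall>e<n. p ! e = j' \<longrightarrow> d' < e" "peg j'" "j' \<noteq> p!d'"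
    using assms(3) by (simp_all add: legal_move_def)
  have A: "p!0 \<noteq> p!d" "p!0 \<noteq> j" "p!0 \<noteq> p!d'" "p!0 \<noteq> j'"
    using L1(1,2) L2(1,2) n assms(4,5) by force+
  show ?thesis
  proof (cases "p!d = p!d'")
    case True
    then have "d \<le> d'" "d' \<le> d" using L1(1) L2(1) dn by auto
    moreover have "j = j'" using A pg True L1(3,4) L2(3,4) unfolding peg_def by auto
    ultimately show ?thesis by simp
  next
    case False
    then have "p!d = j'" "p!d' = j" using A pg L1(3,4) L2(3,4) unfolding peg_def by auto
    then have "d' < d" "d < d'" using L1(2) L2(2) dn by auto
    then show ?thesis by simp
  qed
qed

lemma game_over_tower: "game_over n ec p b s \<Longrightarrow> \<exists>k. tower n p k"
  by (auto simp: game_over_def split: ending.splits)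

lemma game_over_mono: "game_over n ec p b s \<Longrightarrow> (b \<longrightarrow> b') \<Longrightarrow> (s \<longrightarrow> s') \<Longrightarrow> game_over n ec p b' s'"
  by (auto simp: game_over_def split: ending.splits)

context fixes n :: nat and ec :: ending and w12 w13 w23 :: real
begin

abbreviation W where "W \<equiv> wins n ec w12 w13 w23 True"
abbreviation wt where "wt \<equiv> weight w12 w13 w23"

lemma anh_move:
  assumes "ganh s" "glast s \<noteq> Some 0" "legal_move n (gpos s) 0 j"
    "\<forall>k. \<not> tower n (move_pos (gpos s) 0 j) k"
    "W (step n w12 w13 w23 s 0 j)"
  shows "W s"
proof -
  have ne: "\<not> ends_after n ec w12 w13 w23 s 0 j"
    using assms(4) by (auto simp: ends_after_def step_def dest!: game_over_tower)
  have "allowed n ec w12 w13 w23 s 0 j" using assms by (auto simp: allowed_def)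
  then show ?thesis using ne assms by (intro wins.own_turn[where d=0 and j=j]) auto
qed

lemma anh_final:
  assumes "ganh s" "glast s \<noteq> Some 0" "legal_move n (gpos s) 0 j"
    "ends_after n ec w12 w13 w23 s 0 j" "victor True (gdiff (step n w12 w13 w23 s 0 j))"
  shows "W s"
proof -
  have "allowed n ec w12 w13 w23 s 0 j" using assms by (auto simp: allowed_def)
  then show ?thesis using assms by (intro wins.own_turn[where d=0 and j=j]) auto
qed

lemma bao_forced:
  assumes "\<not> ganh s" "glast s = Some 0" "valid n (gpos s)" "legal_move n (gpos s) d j" "d \<noteq> 0"
    "\<forall>k. \<not> tower n (move_pos (gpos s) d j) k"
    "W (step n w12 w13 w23 s d j)"
  shows "W s"
proof (rule wins.opp_turn)
  show "ganh s \<noteq> True" using assms by simp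
  show "\<exists>d j. allowed n ec w12 w13 w23 s d j"
    using assms by (auto simp: allowed_def)
  show "\<forall>d' j'. allowed n ec w12 w13 w23 s d' j' \<longrightarrow>
         (ends_after n ec w12 w13 w23 s d' j' \<and> victor True (gdiff (step n w12 w13 w23 s d' j'))) \<or>
         (\<not> ends_after n ec w12 w13 w23 s d' j' \<and> W (step n w12 w13 w23 s d' j'))"
  proof (intro allI impI)
    fix d' j' assume al: "allowed n ec w12 w13 w23 s d' j'"
    then have "legal_move n (gpos s) d' j'" "d' \<noteq> 0" using assms(2) by (auto simp: allowed_def)
    then have "d' = d \<and> j' = j" using legal_unique assms by metis
    moreover have "\<not> ends_after n ec w12 w13 w23 s d j"
      using assms(6) by (auto simp: ends_after_def step_def dest!: game_over_tower)
    ultimately show "(ends_after n ec w12 w13 w23 s d' j' \<and> victor True (gdiff (step n w12 w13 w23 s d' j'))) \<or>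
         (\<not> ends_after n ec w12 w13 w23 s d' j' \<and> W (step n w12 w13 w23 s d' j'))"
      using assms(7) by auto
  qed
qed

end


fun D :: "real \<Rightarrow> real \<Rightarrow> real \<Rightarrow> nat \<Rightarrow> nat \<Rightarrow> nat \<Rightarrow> real" where
  "D w12 w13 w23 0 a b = 0"
| "D w12 w13 w23 (Suc m) a b = (if m = 0 then weight w12 w13 w23 a b
     else D w12 w13 w23 m a (6-a-b) - weight w12 w13 w23 a b + D w12 w13 w23 m (6-a-b) b)"

declare D.simps[simp del]
lemma D_Suc: "D w12 w13 w23 (Suc (Suc m)) a b = D w12 w13 w23 (Suc m) a (6-a-b) - weight w12 w13 w23 a b + D w12 w13 w23 (Suc m) (6-a-b) b"
  by (simp add: D.simps)
lemma D_one: "D w12 w13 w23 (Suc 0) a b = weight w12 w13 w23 a b"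
  by (simp add: D.simps)

lemma third: "peg a \<Longrightarrow> peg b \<Longrightarrow> a \<noteq> b \<Longrightarrow> peg (6-a-b) \<and> 6-a-b \<noteq> a \<and> 6-a-b \<noteq> b"
  by (auto simp: peg_def)

lemma nth_rep_app: "(replicate m a @ rest) ! e = (if e < m then a else rest ! (e - m))"
  by (simp add: nth_append)

lemma upd_rep_app: "(replicate m c @ x # rest)[m := b] = replicate m c @ b # rest"
  by (simp add: list_update_append)

lemma not_all_tower:
  assumes "\<not>(\<forall>x\<in>set rest. x = b)" "length (replicate m b @ rest) = n" "0 < m"
  shows "\<not> tower n (replicate m b @ rest) k"
proof
  assume t: "tower n (replicate m b @ rest) k"
  obtain i where i: "i < length rest" "rest ! i \<noteq> b" using assms(1) by (auto simp: in_set_conv_nth)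
  have "(replicate m b @ rest) ! (m + i) = k" using t i assms(2) by (auto simp: tower_def)
  then have "rest ! i = k" by (simp add: nth_append)
  moreover have "(replicate m b @ rest) ! 0 = k" using t assms(2,3) by (auto simp: tower_def)
  then have "b = k" using assms(3) by (simp add: nth_append)
  ultimately show False using i by simp
qed



context fixes n :: nat and ec :: ending and w12 w13 w23 :: real
begin

abbreviation DD where "DD \<equiv> D w12 w13 w23"

lemma valid_rep: "length rest + m = n \<Longrightarrow> (m > 0 \<longrightarrow> peg a) \<Longrightarrow> (\<forall>x\<in>set rest. peg x) \<Longrightarrow> valid n (replicate m a @ rest)"
  unfolding valid_def
proof (intro conjI allI impI)
  fix e assume as: "length rest + m = n" "m > 0 \<longrightarrow> peg a" "\<forall>x\<in>set rest. peg x" "e < n"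
  show "peg ((replicate m a @ rest) ! e)"
  proof (cases "e < m")
    case True then show ?thesis using as by (simp add: nth_append)
  next
    case False
    then have "e - m < length rest" using as by simp
    then have "rest ! (e - m) \<in> set rest" by (rule nth_mem)
    then show ?thesis using as False by (simp add: nth_append)
  qed
qed simp

lemma legal_big:
  assumes "length rest + Suc m = n" "a \<noteq> c" "b \<noteq> c" "a \<noteq> b" "peg b" "0 < m"
  shows "legal_move n (replicate m c @ a # rest) m b"
  unfolding legal_move_def
proof (intro conjI allI impI)
  fix e assume "e < n" "(replicate m c @ a # rest) ! e = b"
  then show "m < e" using assms by (cases "e < m"; cases "e = m") (auto simp: nth_append)
next
  fix e assume "e < n" "(replicate m c @ a # rest) ! e = (replicate m c @ a # rest) ! m"
  then show "m \<le> e" using assms by (cases "e < m") (auto simp: nth_append)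
qed (use assms in \<open>auto simp: nth_append\<close>)

lemma nontower_big:
  assumes "length rest + Suc m = n" "b \<noteq> c" "0 < m"
  shows "\<not> tower n ((replicate m c @ a # rest)[m := b]) k"
proof
  assume "tower n ((replicate m c @ a # rest)[m := b]) k"
  then have "(replicate m c @ b # rest) ! 0 = k" "(replicate m c @ b # rest) ! m = k"
    using assms by (auto simp: tower_def upd_rep_app)
  then show False using assms by (simp add: nth_append)
qed

lemma transfer:
  "\<And>a b rest l big sm \<delta>. length rest + Suc m = n \<Longrightarrow> (\<forall>x\<in>set rest. peg x) \<Longrightarrow> peg a \<Longrightarrow> peg b \<Longrightarrow> a \<noteq> b
   \<Longrightarrow> \<not>(\<forall>x\<in>set rest. x = b) \<Longrightarrow> l \<noteq> Some 0
   \<Longrightarrow> W n ec w12 w13 w23 (mk (replicate (Suc m) b @ rest) (Some 0) big True (\<delta> + DD (Suc m) a b) False)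
   \<Longrightarrow> W n ec w12 w13 w23 (mk (replicate (Suc m) a @ rest) l big sm \<delta> True)"
proof (induction m)
  case 0
  have ne: "rest \<noteq> []" using 0 by auto
  show ?case
  proof (rule anh_move[where j=b])
    show "legal_move n (gpos (mk (replicate (Suc 0) a @ rest) l big sm \<delta> True)) 0 b"
      unfolding legal_move_def
    proof (intro conjI allI impI)
      fix e assume "e < n" "gpos (mk (replicate (Suc 0) a @ rest) l big sm \<delta> True) ! e = b"
      then show "0 < e" using 0 by (cases e) auto
    qed (use 0 in auto)
    show "\<forall>k. \<not> tower n (move_pos (gpos (mk (replicate (Suc 0) a @ rest) l big sm \<delta> True)) 0 b) k"
      using not_all_tower[of rest b "Suc 0" n] 0 by (simp add: move_pos_def)
    have "n - 1 \<noteq> 0" using 0 ne by (cases rest) auto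
    then show "W n ec w12 w13 w23 (step n w12 w13 w23 (mk (replicate (Suc 0) a @ rest) l big sm \<delta> True) 0 b)"
      using 0 by (simp add: step_mk D_one)
  qed (use 0 in auto)
next
  case (Suc m)
  define c where "c = 6 - a - b"
  have c: "peg c" "c \<noteq> a" "c \<noteq> b" using third[OF Suc.prems(3,4,5)] c_def by auto
  have ne: "rest \<noteq> []" using Suc by auto
  have mn: "Suc m \<noteq> n - 1" using Suc.prems(1) ne by (cases rest) auto
  have e1: "replicate (Suc (Suc m)) a @ rest = replicate (Suc m) a @ (a # rest)"
    by (simp add: replicate_app_Cons_same)
  have e2: "replicate (Suc (Suc m)) b @ rest = replicate (Suc m) b @ (b # rest)"
    by (simp add: replicate_app_Cons_same)
  have D: "DD (Suc (Suc m)) a b = DD (Suc m) a c - weight w12 w13 w23 a b + DD (Suc m) c b"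
    by (simp add: c_def D_Suc)
  show ?case unfolding e1
  proof (rule Suc.IH[where b=c])
    show "length (a # rest) + Suc m = n" using Suc by simp
    show "\<forall>x\<in>set (a # rest). peg x" using Suc by simp
    show "\<not> (\<forall>x\<in>set (a # rest). x = c)" using c by simp
    show "W n ec w12 w13 w23 (mk (replicate (Suc m) c @ a # rest) (Some 0) big True (\<delta> + DD (Suc m) a c) False)"
    proof (rule bao_forced[where d="Suc m" and j=b])
      show "valid n (gpos (mk (replicate (Suc m) c @ a # rest) (Some 0) big True (\<delta> + DD (Suc m) a c) False))"
        unfolding mk_sel by (rule valid_rep) (use Suc c in simp_all)
      show "legal_move n (gpos (mk (replicate (Suc m) c @ a # rest) (Some 0) big True (\<delta> + DD (Suc m) a c) False)) (Suc m) b"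
        using legal_big[of rest "Suc m" a c b] Suc c by simp
      show "\<forall>k. \<not> tower n (move_pos (gpos (mk (replicate (Suc m) c @ a # rest) (Some 0) big True (\<delta> + DD (Suc m) a c) False)) (Suc m) b) k"
        using nontower_big[of rest "Suc m" b c a] Suc c by (simp add: move_pos_def)
      have st: "step n w12 w13 w23 (mk (replicate (Suc m) c @ a # rest) (Some 0) big True (\<delta> + DD (Suc m) a c) False) (Suc m) b
          = mk (replicate (Suc m) c @ b # rest) (Some (Suc m)) big True (\<delta> + DD (Suc m) a c - weight w12 w13 w23 a b) True"
        using mn by (simp add: step_mk upd_rep_app nth_append)
      show "W n ec w12 w13 w23 (step n w12 w13 w23 (mk (replicate (Suc m) c @ a # rest) (Some 0) big True (\<delta> + DD (Suc m) a c) False) (Suc m) b)"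
        unfolding st
      proof (rule Suc.IH[where a=c])
        show "length (b # rest) + Suc m = n" using Suc by simp
        show "\<forall>x\<in>set (b # rest). peg x" using Suc by simp
        show "\<not> (\<forall>x\<in>set (b # rest). x = b)" using Suc by simp
        show "W n ec w12 w13 w23 (mk (replicate (Suc m) b @ b # rest) (Some 0) big True
           (\<delta> + DD (Suc m) a c - weight w12 w13 w23 a b + DD (Suc m) c b) False)"
        proof -
          have eq: "\<delta> + DD (Suc (Suc m)) a b = \<delta> + DD (Suc m) a c - weight w12 w13 w23 a b + DD (Suc m) c b"
            unfolding D by simp
          show ?thesis using Suc.prems(8) unfolding e2 eq by assumption
        qed
      qed (use Suc c in simp_all)
    qed simp_all
  qed (use Suc c in simp_all)
qed

end


context fixes n :: nat and ec :: ending and w12 w13 w23 :: real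
begin

lemma transfer_end:
  "\<And>a b l big sm \<delta>. Suc m \<le> n \<Longrightarrow> peg a \<Longrightarrow> peg b \<Longrightarrow> a \<noteq> b \<Longrightarrow> l \<noteq> Some 0
   \<Longrightarrow> game_over n ec (replicate n b) big True \<Longrightarrow> victor True (\<delta> + D w12 w13 w23 (Suc m) a b)
   \<Longrightarrow> W n ec w12 w13 w23 (mk (replicate (Suc m) a @ replicate (n - Suc m) b) l big sm \<delta> True)"
proof (induction m)
  case 0
  have rp: "(a # replicate (n - Suc 0) b)[0 := b] = replicate n b"
    using 0 by (cases n) auto
  show ?case
  proof (rule anh_final[where j=b])
    show "legal_move n (gpos (mk (replicate (Suc 0) a @ replicate (n - Suc 0) b) l big sm \<delta> True)) 0 b"
      unfolding legal_move_def
    proof (intro conjI allI impI)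
      fix e assume "e < n" "gpos (mk (replicate (Suc 0) a @ replicate (n - Suc 0) b) l big sm \<delta> True) ! e = b"
      then show "0 < e" using 0 by (cases e) auto
    qed (use 0 in auto)
    show "ends_after n ec w12 w13 w23 (mk (replicate (Suc 0) a @ replicate (n - Suc 0) b) l big sm \<delta> True) 0 b"
      unfolding ends_after_def Let_def step_mk using rp 0 by (auto intro: game_over_mono)
    show "victor True (gdiff (step n w12 w13 w23 (mk (replicate (Suc 0) a @ replicate (n - Suc 0) b) l big sm \<delta> True) 0 b))"
      using 0 by (simp add: step_mk D_one)
  qed (use 0 in simp_all)
next
  case (Suc m)
  define c where "c = 6 - a - b"
  have c: "peg c" "c \<noteq> a" "c \<noteq> b" using third[OF Suc.prems(2,3,4)] c_def by auto
  define r where "r = replicate (n - Suc (Suc m)) b"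
  have nn: "n - Suc m = Suc (n - Suc (Suc m))" using Suc.prems(1) by linarith
  have rb: "b # r = replicate (n - Suc m) b" unfolding r_def nn by simp
  have e1: "replicate (Suc (Suc m)) a @ replicate (n - Suc (Suc m)) b = replicate (Suc m) a @ (a # r)"
    by (simp add: replicate_app_Cons_same r_def)
  have mn: "Suc m = n - 1 \<longrightarrow> True" by simp
  show ?case unfolding e1
  proof (rule transfer[where b=c])
    show "length (a # r) + Suc m = n" using Suc.prems(1) by (simp add: r_def)
    show "\<forall>x\<in>set (a # r). peg x" using Suc.prems by (simp add: r_def)
    show "\<not> (\<forall>x\<in>set (a # r). x = c)" using c by simp
    show "W n ec w12 w13 w23 (mk (replicate (Suc m) c @ a # r) (Some 0) big True (\<delta> + D w12 w13 w23 (Suc m) a c) False)"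
    proof (rule bao_forced[where d="Suc m" and j=b])
      show "valid n (gpos (mk (replicate (Suc m) c @ a # r) (Some 0) big True (\<delta> + D w12 w13 w23 (Suc m) a c) False))"
        unfolding mk_sel by (rule valid_rep) (use Suc c in \<open>simp_all add: r_def\<close>)
      show "legal_move n (gpos (mk (replicate (Suc m) c @ a # r) (Some 0) big True (\<delta> + D w12 w13 w23 (Suc m) a c) False)) (Suc m) b"
        using legal_big[of r "Suc m" n a c b] Suc.prems c by (simp add: r_def)
      show "\<forall>k. \<not> tower n (move_pos (gpos (mk (replicate (Suc m) c @ a # r) (Some 0) big True (\<delta> + D w12 w13 w23 (Suc m) a c) False)) (Suc m) b) k"
        using nontower_big[of r "Suc m" n b c a] Suc.prems c by (simp add: move_pos_def r_def)
      have st: "step n w12 w13 w23 (mk (replicate (Suc m) c @ a # r) (Some 0) big True (\<delta> + D w12 w13 w23 (Suc m) a c) False) (Suc m) b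
          = mk (replicate (Suc m) c @ replicate (n - Suc m) b) (Some (Suc m)) (big \<or> Suc m = n - 1) True (\<delta> + D w12 w13 w23 (Suc m) a c - weight w12 w13 w23 a b) True"
        by (simp add: step_mk upd_rep_app nth_append flip: rb)
      have eq: "\<delta> + D w12 w13 w23 (Suc (Suc m)) a b = \<delta> + D w12 w13 w23 (Suc m) a c - weight w12 w13 w23 a b + D w12 w13 w23 (Suc m) c b"
        by (simp add: c_def D_Suc)
      show "W n ec w12 w13 w23 (step n w12 w13 w23 (mk (replicate (Suc m) c @ a # r) (Some 0) big True (\<delta> + D w12 w13 w23 (Suc m) a c) False) (Suc m) b)"
        unfolding st
      proof (rule Suc.IH)
        show "game_over n ec (replicate n b) (big \<or> Suc m = n - 1) True"
          using Suc.prems(6) by (auto intro: game_over_mono)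
        show "victor True (\<delta> + D w12 w13 w23 (Suc m) a c - weight w12 w13 w23 a b + D w12 w13 w23 (Suc m) c b)"
          using Suc.prems(7) unfolding eq by assumption
      qed (use Suc c in simp_all)
    qed simp_all
  qed (use Suc c in simp_all)
qed

end


definition LastOK where
  "LastOK n ec w12 w13 w23 x y \<delta> \<longleftrightarrow> (\<forall>l big sm. l \<noteq> Some 0 \<longrightarrow> big \<longrightarrow>
     W n ec w12 w13 w23 (mk (replicate (n - 1) x @ [y]) l big sm \<delta> True))"

fun Ch :: "real \<Rightarrow> real \<Rightarrow> real \<Rightarrow> nat \<Rightarrow> nat \<Rightarrow> nat \<Rightarrow> nat \<Rightarrow> real" where
  "Ch w12 w13 w23 0 j x y = 0"
| "Ch w12 w13 w23 (Suc k) j x y = D w12 w13 w23 j x y - weight w12 w13 w23 1 x + Ch w12 w13 w23 k (Suc j) y x"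

context fixes n :: nat and ec :: ending and w12 w13 w23 :: real
begin

lemma chain:
  "\<And>j x y l big sm \<delta>. 1 \<le> j \<Longrightarrow> j + k + 1 = n \<Longrightarrow> x \<in> {2,3} \<Longrightarrow> y = 5 - x \<Longrightarrow> l \<noteq> Some 0
   \<Longrightarrow> (k = 0 \<longrightarrow> big)
   \<Longrightarrow> LastOK n ec w12 w13 w23 (if even k then x else y) (if even k then y else x) (\<delta> + Ch w12 w13 w23 k j x y)
   \<Longrightarrow> W n ec w12 w13 w23 (mk (replicate j x @ y # replicate k 1) l big sm \<delta> True)"
proof (induction k)
  case 0
  then have "j = n - 1" by simp
  then show ?case using 0 unfolding LastOK_def by auto
next
  case (Suc k)
  obtain m where jm: "j = Suc m" using Suc.prems(1) by (cases j) auto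
  have xy: "peg x" "peg y" "x \<noteq> y" "x \<noteq> 1" "y \<noteq> 1" "y \<in> {2,3}"
    using Suc.prems(3,4) by (auto simp: peg_def)
  have yx: "x = 5 - y" using Suc.prems(3,4) by auto
  have e1: "replicate j y @ y # replicate (Suc k) 1 = replicate (Suc j) y @ 1 # replicate k 1"
    by (simp add: replicate_app_Cons_same)
  show ?case unfolding jm
  proof (rule transfer[where b=y])
    show "length (y # replicate (Suc k) 1) + Suc m = n" using Suc.prems(2) jm by simp
    show "\<forall>x\<in>set (y # replicate (Suc k) 1). peg x" using xy by (simp add: peg_def)
    show "\<not> (\<forall>x\<in>set (y # replicate (Suc k) 1). x = y)" using xy by simp
    show "W n ec w12 w13 w23 (mk (replicate (Suc m) y @ y # replicate (Suc k) 1) (Some 0) big True (\<delta> + D w12 w13 w23 (Suc m) x y) False)"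
      unfolding jm[symmetric] e1
    proof (rule bao_forced[where d="Suc j" and j=x])
      show "valid n (gpos (mk (replicate (Suc j) y @ 1 # replicate k 1) (Some 0) big True (\<delta> + D w12 w13 w23 j x y) False))"
        unfolding mk_sel by (rule valid_rep) (use Suc.prems xy in \<open>simp_all add: peg_def\<close>)
      show "legal_move n (gpos (mk (replicate (Suc j) y @ 1 # replicate k 1) (Some 0) big True (\<delta> + D w12 w13 w23 j x y) False)) (Suc j) x"
        using legal_big[of "replicate k 1" "Suc j" n 1 y x] Suc.prems xy by simp
      show "\<forall>k'. \<not> tower n (move_pos (gpos (mk (replicate (Suc j) y @ 1 # replicate k 1) (Some 0) big True (\<delta> + D w12 w13 w23 j x y) False)) (Suc j) x) k'"
        using nontower_big[of "replicate k 1" "Suc j" n x y 1] Suc.prems xy by (simp add: move_pos_def)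
      have st: "step n w12 w13 w23 (mk (replicate (Suc j) y @ 1 # replicate k 1) (Some 0) big True (\<delta> + D w12 w13 w23 j x y) False) (Suc j) x
          = mk (replicate (Suc j) y @ x # replicate k 1) (Some (Suc j)) (big \<or> Suc j = n - 1) True (\<delta> + D w12 w13 w23 j x y - weight w12 w13 w23 1 x) True"
        by (simp add: step_mk upd_rep_app nth_append)
      show "W n ec w12 w13 w23 (step n w12 w13 w23 (mk (replicate (Suc j) y @ 1 # replicate k 1) (Some 0) big True (\<delta> + D w12 w13 w23 j x y) False) (Suc j) x)"
        unfolding st
      proof (rule Suc.IH)
        show "k = 0 \<longrightarrow> big \<or> Suc j = n - 1" using Suc.prems(2) by auto
        have eq: "\<delta> + Ch w12 w13 w23 (Suc k) j x y = \<delta> + D w12 w13 w23 j x y - weight w12 w13 w23 1 x + Ch w12 w13 w23 k (Suc j) y x"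
          by simp
        show "LastOK n ec w12 w13 w23 (if even k then y else x) (if even k then x else y)
             (\<delta> + D w12 w13 w23 j x y - weight w12 w13 w23 1 x + Ch w12 w13 w23 k (Suc j) y x)"
          using Suc.prems(7) unfolding eq by (cases "even k") simp_all
      qed (use Suc.prems(2) xy yx in simp_all)
    qed simp_all
  qed (use Suc.prems(5) xy in simp_all)
qed

lemma lastA:
  assumes "2 \<le> n" "peg x" "peg y" "x \<noteq> y" "game_over n ec (replicate n y) True True"
    "victor True (\<delta> + D w12 w13 w23 (n - 1) x y)"
  shows "LastOK n ec w12 w13 w23 x y \<delta>"
  unfolding LastOK_def
proof (intro allI impI)
  fix l big sm assume l: "l \<noteq> Some (0::nat)" and big: big
  obtain m where m: "n - 1 = Suc m" using assms(1) by (cases "n - 1") auto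
  have r: "replicate (n - 1) x @ [y] = replicate (Suc m) x @ replicate (n - Suc m) y"
  proof -
    have "n - Suc m = 1" using m assms(1) by linarith
    then show ?thesis using m by simp
  qed
  show "W n ec w12 w13 w23 (mk (replicate (n - 1) x @ [y]) l big sm \<delta> True)"
    unfolding r
    by (rule transfer_end) (use assms l big m in \<open>simp_all flip: m\<close>)
qed

end


context fixes n :: nat and ec :: ending and w12 w13 w23 :: real
begin

lemma bao_big:
  assumes "length rest + Suc m = n" "peg a" "peg b" "peg c" "a \<noteq> c" "b \<noteq> c" "a \<noteq> b" "0 < m"
    "\<forall>x\<in>set rest. peg x"
    "W n ec w12 w13 w23 (mk (replicate m c @ b # rest) (Some m) (big \<or> m = n - 1) sm (\<delta> - weight w12 w13 w23 a b) True)"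
  shows "W n ec w12 w13 w23 (mk (replicate m c @ a # rest) (Some 0) big sm \<delta> False)"
proof (rule bao_forced[where d=m and j=b])
  show "valid n (gpos (mk (replicate m c @ a # rest) (Some 0) big sm \<delta> False))"
    unfolding mk_sel by (rule valid_rep) (use assms in \<open>simp_all\<close>)
  show "legal_move n (gpos (mk (replicate m c @ a # rest) (Some 0) big sm \<delta> False)) m b"
    using legal_big[of rest m n a c b] assms by simp
  show "\<forall>k. \<not> tower n (move_pos (gpos (mk (replicate m c @ a # rest) (Some 0) big sm \<delta> False)) m b) k"
    using nontower_big[of rest m n b c a] assms by (simp add: move_pos_def)
  have st: "step n w12 w13 w23 (mk (replicate m c @ a # rest) (Some 0) big sm \<delta> False) m b
      = mk (replicate m c @ b # rest) (Some m) (big \<or> m = n - 1) sm (\<delta> - weight w12 w13 w23 a b) True"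
    using assms(8) by (simp add: step_mk upd_rep_app nth_append)
  show "W n ec w12 w13 w23 (step n w12 w13 w23 (mk (replicate m c @ a # rest) (Some 0) big sm \<delta> False) m b)"
    unfolding st by (rule assms(10))
qed (use assms in simp_all)

lemma lastB:
  assumes "3 \<le> n" "x \<in> {2,3}" "y = 5 - x" "game_over n ec (replicate n 1) True True"
    "victor True (\<delta> + D w12 w13 w23 (n - 1) x 1 - weight w12 w13 w23 y x + D w12 w13 w23 (n - 1) 1 y
        - weight w12 w13 w23 x 1 + D w12 w13 w23 (n - 1) y 1)"
  shows "LastOK n ec w12 w13 w23 x y \<delta>"
  unfolding LastOK_def
proof (intro allI impI)
  fix l big sm assume l: "l \<noteq> Some (0::nat)" and big: big
  obtain m where m: "n - 1 = Suc m" using assms(1) by (cases "n - 1") auto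
  have nm: "n = Suc (Suc m)" using m assms(1) by linarith
  have xy: "peg x" "peg y" "x \<noteq> y" "x \<noteq> 1" "y \<noteq> 1" "peg 1"
    using assms(2,3) by (auto simp: peg_def)
  let ?D = "D w12 w13 w23 (Suc m)"
  let ?w = "weight w12 w13 w23"
  have fin: "W n ec w12 w13 w23 (mk (replicate (Suc m) y @ [1]) (Some (Suc m)) True True
        (\<delta> + ?D x 1 - ?w y x + ?D 1 y - ?w x 1) True)"
  proof -
    have r: "replicate (Suc m) y @ [1] = replicate (Suc m) y @ replicate (n - Suc m) 1" using nm by simp
    show ?thesis unfolding r
      by (rule transfer_end) (use assms xy m nm in \<open>simp_all add: algebra_simps\<close>)
  qed
  have s3: "W n ec w12 w13 w23 (mk (replicate (Suc m) 1 @ [x]) (Some (Suc m)) True True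
        (\<delta> + ?D x 1 - ?w y x) True)"
  proof (rule transfer[where b=y])
    show "W n ec w12 w13 w23 (mk (replicate (Suc m) y @ [x]) (Some 0) True True (\<delta> + ?D x 1 - ?w y x + ?D 1 y) False)"
      by (rule bao_big[where b=1 and c=y]) (use xy nm fin in simp_all)
  qed (use xy nm in simp_all)
  have "W n ec w12 w13 w23 (mk (replicate (Suc m) x @ [y]) l big sm \<delta> True)"
  proof (rule transfer[where b=1])
    show "W n ec w12 w13 w23 (mk (replicate (Suc m) 1 @ [y]) (Some 0) big True (\<delta> + ?D x 1) False)"
      by (rule bao_big[where b=x and c=1]) (use xy nm s3 big in simp_all)
  qed (use xy nm l in simp_all)
  then show "W n ec w12 w13 w23 (mk (replicate (n - 1) x @ [y]) l big sm \<delta> True)" using m by simp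
qed

end


definition sp :: "nat \<Rightarrow> nat \<Rightarrow> nat \<Rightarrow> nat \<Rightarrow> pos" where
  "sp n a b c = [a,b,c] @ replicate (n-3) 1"

lemma sp_len: "3 \<le> n \<Longrightarrow> length (sp n a b c) = n" by (simp add: sp_def)

lemma sp_nth: "3 \<le> n \<Longrightarrow> e < n \<Longrightarrow> sp n a b c ! e = (if e = 0 then a else if e = 1 then b else if e = 2 then c else 1)"
  by (auto simp: sp_def nth_append nth_Cons' numeral_3_eq_3)

lemma sp_0[simp]: "sp n a b c ! 0 = a" and sp_1[simp]: "sp n a b c ! Suc 0 = b" and sp_2[simp]: "sp n a b c ! 2 = c"
  by (simp_all add: sp_def)

lemma sp_upd[simp]: "(sp n a b c)[0 := x] = sp n x b c" "(sp n a b c)[Suc 0 := x] = sp n a x c" "(sp n a b c)[2 := x] = sp n a b x"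
  by (simp_all add: sp_def numeral_2_eq_2)

lemma sp_last: "3 \<le> n \<Longrightarrow> sp n a b c ! (n - 1) = (if n = 3 then c else 1)"
  using sp_nth[of n "n-1" a b c] by auto
lemma sp_last': "3 \<le> n \<Longrightarrow> sp n a b c ! (n - 1) \<noteq> 1 \<longleftrightarrow> n = 3 \<and> c \<noteq> 1"
  using sp_last by simp

lemma sp_tower: "3 \<le> n \<Longrightarrow> tower n (sp n a b c) k \<Longrightarrow> a = k \<and> b = k \<and> c = k"
proof -
  assume n: "3 \<le> n" and t: "tower n (sp n a b c) k"
  have A: "\<forall>e<n. sp n a b c ! e = k" using t unfolding tower_def .
  have "a = k" using spec[OF A, of 0] n by simp
  moreover have "b = k" using spec[OF A, of "Suc 0"] n by simp
  moreover have "c = k" using spec[OF A, of 2] n by simp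
  ultimately show ?thesis by simp
qed

lemma sp_valid: "3 \<le> n \<Longrightarrow> peg a \<Longrightarrow> peg b \<Longrightarrow> peg c \<Longrightarrow> valid n (sp n a b c)"
  unfolding valid_def by (auto simp: sp_len sp_nth peg_def)

lemma legal_0: "legal_move n p 0 j \<longleftrightarrow> 0 < n \<and> peg j \<and> j \<noteq> p ! 0"
  unfolding legal_move_def by (metis gr0I le0)

lemma legal_1: assumes "3 \<le> n" "peg j'" "j' \<noteq> b" "j \<noteq> b" "j \<noteq> j'"
  shows "legal_move n (sp n j b c) 1 j'"
  unfolding legal_move_def
proof (intro conjI allI impI)
  fix e assume "e < n" "sp n j b c ! e = sp n j b c ! 1"
  then show "1 \<le> e" using assms sp_nth[of n e j b c] by (cases "e = 0") auto
next
  fix e assume "e < n" "sp n j b c ! e = j'"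
  then show "1 < e" using assms sp_nth[of n e j b c] by (cases "e = 0"; cases "e = 1") auto
qed (use assms in auto)

lemma legal_2: assumes "3 \<le> n" "peg j'" "j' \<noteq> c" "j \<noteq> c" "j \<noteq> j'"
  shows "legal_move n (sp n j j c) 2 j'"
  unfolding legal_move_def
proof (intro conjI allI impI)
  fix e assume "e < n" "sp n j j c ! e = sp n j j c ! 2"
  then show "2 \<le> e" using assms sp_nth[of n e j j c] by (cases "e = 0"; cases "e = 1") auto
next
  fix e assume "e < n" "sp n j j c ! e = j'"
  then show "2 < e" using assms sp_nth[of n e j j c] by (cases "e = 0"; cases "e = 1"; cases "e = 2") auto
qed (use assms in auto)

fun nxt :: "nat \<times> nat \<times> nat \<Rightarrow> nat \<Rightarrow> nat \<times> nat \<times> nat" where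
  "nxt (a,b,c) j = (if b \<noteq> j then (j, 6-j-b, c) else (j, b, 6-j-c))"

fun run :: "nat \<times> nat \<times> nat \<Rightarrow> nat list \<Rightarrow> nat \<times> nat \<times> nat" where
  "run t [] = t"
| "run t (j # js) = run (nxt t j) js"

fun okr :: "nat \<times> nat \<times> nat \<Rightarrow> nat list \<Rightarrow> bool" where
  "okr t [] = True"
| "okr (a,b,c) (j # js) = (peg j \<and> j \<noteq> a \<and> \<not> (b = j \<and> c = j) \<and> okr (nxt (a,b,c) j) js)"

fun bw :: "real \<Rightarrow> real \<Rightarrow> real \<Rightarrow> nat \<times> nat \<times> nat \<Rightarrow> nat \<Rightarrow> real" where
  "bw w12 w13 w23 (a,b,c) j = (if b \<noteq> j then weight w12 w13 w23 b (6-j-b) else weight w12 w13 w23 c (6-j-c))"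

fun score :: "real \<Rightarrow> real \<Rightarrow> real \<Rightarrow> nat \<times> nat \<times> nat \<Rightarrow> nat list \<Rightarrow> real" where
  "score w12 w13 w23 t [] = 0"
| "score w12 w13 w23 (a,b,c) (j # js) = weight w12 w13 w23 a j - bw w12 w13 w23 (a,b,c) j + score w12 w13 w23 (nxt (a,b,c) j) js"

fun pt :: "nat \<times> nat \<times> nat \<Rightarrow> bool" where
  "pt (a,b,c) = (peg a \<and> peg b \<and> peg c)"

fun spt :: "nat \<Rightarrow> nat \<times> nat \<times> nat \<Rightarrow> pos" where
  "spt n (a,b,c) = sp n a b c"

definition Q where
  "Q n ec w12 w13 w23 t \<delta> \<longleftrightarrow> (\<forall>l big sm. l \<noteq> Some 0 \<longrightarrow> (spt n t ! (n - 1) \<noteq> 1 \<longrightarrow> big) \<longrightarrow>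
      W n ec w12 w13 w23 (mk (spt n t) l big sm \<delta> True))"

lemma Qapp: "Q n ec w12 w13 w23 t \<delta> \<Longrightarrow> l \<noteq> Some 0 \<Longrightarrow> (spt n t ! (n - 1) \<noteq> 1 \<longrightarrow> big)
   \<Longrightarrow> W n ec w12 w13 w23 (mk (spt n t) l big sm \<delta> True)"
  unfolding Q_def by blast

context fixes n :: nat and ec :: ending and w12 w13 w23 :: real
begin

lemma one_step:
  assumes n: "3 \<le> n" and p: "peg a" "peg b" "peg c" and j: "peg j" "j \<noteq> a" "\<not> (b = j \<and> c = j)"
    and l: "l \<noteq> Some 0" and inv: "sp n a b c ! (n - 1) \<noteq> 1 \<longrightarrow> big"
    and q: "Q n ec w12 w13 w23 (nxt (a,b,c) j) (\<delta> + weight w12 w13 w23 a j - bw w12 w13 w23 (a,b,c) j)"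
  shows "W n ec w12 w13 w23 (mk (sp n a b c) l big sm \<delta> True)"
proof (rule anh_move[where j=j])
  show "legal_move n (gpos (mk (sp n a b c) l big sm \<delta> True)) 0 j" using n j by (simp add: legal_0)
  show "\<forall>k. \<not> tower n (move_pos (gpos (mk (sp n a b c) l big sm \<delta> True)) 0 j) k"
    using sp_tower[OF n, of j b c] j by (auto simp: move_pos_def)
  have n0: "0 \<noteq> n - 1" using n by simp
  have st: "step n w12 w13 w23 (mk (sp n a b c) l big sm \<delta> True) 0 j = mk (sp n j b c) (Some 0) big True (\<delta> + weight w12 w13 w23 a j) False"
    using n0 by (simp add: step_mk)
  show "W n ec w12 w13 w23 (step n w12 w13 w23 (mk (sp n a b c) l big sm \<delta> True) 0 j)"
    unfolding st
  proof (cases "b \<noteq> j")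
    case True
    define j' where "j' = 6 - j - b"
    have j': "peg j'" "j' \<noteq> b" "j' \<noteq> j" using third[of j b] j p True j'_def by auto
    show "W n ec w12 w13 w23 (mk (sp n j b c) (Some 0) big True (\<delta> + weight w12 w13 w23 a j) False)"
    proof (rule bao_forced[where d=1 and j=j'])
      show "valid n (gpos (mk (sp n j b c) (Some 0) big True (\<delta> + weight w12 w13 w23 a j) False))"
        using sp_valid n p j by simp
      show "legal_move n (gpos (mk (sp n j b c) (Some 0) big True (\<delta> + weight w12 w13 w23 a j) False)) 1 j'"
        using legal_1[OF n j'(1,2)] True j' by simp
      show "\<forall>k. \<not> tower n (move_pos (gpos (mk (sp n j b c) (Some 0) big True (\<delta> + weight w12 w13 w23 a j) False)) 1 j') k"
        using sp_tower[OF n, of j j' c] j' by (auto simp: move_pos_def)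
      have n1: "1 \<noteq> n - 1" using n by simp
      have st2: "step n w12 w13 w23 (mk (sp n j b c) (Some 0) big True (\<delta> + weight w12 w13 w23 a j) False) 1 j'
         = mk (sp n j j' c) (Some 1) big True (\<delta> + weight w12 w13 w23 a j - bw w12 w13 w23 (a,b,c) j) True"
        using n1 True by (simp add: step_mk j'_def)
      have nx: "nxt (a,b,c) j = (j, j', c)" using True j'_def by simp
      show "W n ec w12 w13 w23 (step n w12 w13 w23 (mk (sp n j b c) (Some 0) big True (\<delta> + weight w12 w13 w23 a j) False) 1 j')"
      proof -
        have inv2: "sp n j j' c ! (n - 1) \<noteq> 1 \<longrightarrow> big" using inv n sp_last'[OF n] by metis
        have "W n ec w12 w13 w23 (mk (spt n (nxt (a,b,c) j)) (Some 1) (big) True (\<delta> + weight w12 w13 w23 a j - bw w12 w13 w23 (a,b,c) j) True)"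
          by (rule Qapp[OF q]; use inv2 in \<open>simp only: nx spt.simps option.inject\<close>; simp)
        then show ?thesis unfolding st2 nx spt.simps .
      qed
    qed simp_all
  next
    case False
    then have bj: "b = j" by simp
    then have cj: "c \<noteq> j" using j by simp
    define j' where "j' = 6 - j - c"
    have j': "peg j'" "j' \<noteq> c" "j' \<noteq> j" using third[of j c] j p cj j'_def by auto
    show "W n ec w12 w13 w23 (mk (sp n j b c) (Some 0) big True (\<delta> + weight w12 w13 w23 a j) False)"
      unfolding bj
    proof (rule bao_forced[where d=2 and j=j'])
      show "valid n (gpos (mk (sp n j j c) (Some 0) big True (\<delta> + weight w12 w13 w23 a j) False))"
        using sp_valid n p j by simp
      show "legal_move n (gpos (mk (sp n j j c) (Some 0) big True (\<delta> + weight w12 w13 w23 a j) False)) 2 j'"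
        using legal_2[OF n j'(1,2)] cj j' by simp
      show "\<forall>k. \<not> tower n (move_pos (gpos (mk (sp n j j c) (Some 0) big True (\<delta> + weight w12 w13 w23 a j) False)) 2 j') k"
        using sp_tower[OF n, of j j j'] j' by (auto simp: move_pos_def)
      have st2: "step n w12 w13 w23 (mk (sp n j j c) (Some 0) big True (\<delta> + weight w12 w13 w23 a j) False) 2 j'
         = mk (sp n j j j') (Some 2) (big \<or> 2 = n - 1) True (\<delta> + weight w12 w13 w23 a j - bw w12 w13 w23 (a,b,c) j) True"
        using bj by (simp add: step_mk j'_def)
      have nx: "nxt (a,b,c) j = (j, j, j')" using bj j'_def by simp
      show "W n ec w12 w13 w23 (step n w12 w13 w23 (mk (sp n j j c) (Some 0) big True (\<delta> + weight w12 w13 w23 a j) False) 2 j')"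
      proof -
        have inv2: "sp n j j j' ! (n - 1) \<noteq> 1 \<longrightarrow> big \<or> 2 = n - 1" using n sp_last'[OF n] by auto
        have "W n ec w12 w13 w23 (mk (spt n (nxt (a,b,c) j)) (Some 2) (big \<or> 2 = n - 1) True (\<delta> + weight w12 w13 w23 a j - bw w12 w13 w23 (a,b,c) j) True)"
          by (rule Qapp[OF q]; use inv2 in \<open>simp only: nx spt.simps option.inject\<close>; simp)
        then show ?thesis unfolding st2 nx spt.simps .
      qed
    qed simp_all
  qed
qed (use j l in simp_all)

end


lemma pt_nxt: "pt (a,b,c) \<Longrightarrow> peg j \<Longrightarrow> j \<noteq> a \<Longrightarrow> \<not> (b = j \<and> c = j) \<Longrightarrow> pt (nxt (a,b,c) j)"
  using third[of j b] third[of j c] by auto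

context fixes n :: nat and ec :: ending and w12 w13 w23 :: real
begin

lemma run_lemma:
  "\<And>t \<delta>. 3 \<le> n \<Longrightarrow> pt t \<Longrightarrow> okr t js \<Longrightarrow> Q n ec w12 w13 w23 (run t js) (\<delta> + score w12 w13 w23 t js)
    \<Longrightarrow> Q n ec w12 w13 w23 t \<delta>"
proof (induction js)
  case Nil then show ?case by simp
next
  case (Cons j js)
  obtain a b c where t: "t = (a,b,c)" by (cases t) auto
  have ok: "peg j" "j \<noteq> a" "\<not> (b = j \<and> c = j)" "okr (nxt (a,b,c) j) js" using Cons.prems(3) t by auto
  have p: "peg a" "peg b" "peg c" using Cons.prems(2) t by auto
  have q: "Q n ec w12 w13 w23 (nxt (a,b,c) j) (\<delta> + weight w12 w13 w23 a j - bw w12 w13 w23 (a,b,c) j)"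
  proof (rule Cons.IH)
    show "pt (nxt (a, b, c) j)" using pt_nxt p ok by simp
    have eq: "\<delta> + weight w12 w13 w23 a j - bw w12 w13 w23 (a,b,c) j + score w12 w13 w23 (nxt (a, b, c) j) js
       = \<delta> + score w12 w13 w23 t (j # js)" using t by simp
    show "Q n ec w12 w13 w23 (run (nxt (a, b, c) j) js)
        (\<delta> + weight w12 w13 w23 a j - bw w12 w13 w23 (a,b,c) j + score w12 w13 w23 (nxt (a, b, c) j) js)"
      unfolding eq using Cons.prems(4) t by simp
  qed (use Cons.prems ok in simp_all)
  show ?case unfolding t Q_def spt.simps
  proof (intro allI impI)
    fix l big sm assume "l \<noteq> Some (0::nat)" "sp n a b c ! (n - 1) \<noteq> 1 \<longrightarrow> big"
    then show "W n ec w12 w13 w23 (mk (sp n a b c) l big sm \<delta> True)"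
      using one_step[OF Cons.prems(1) p ok(1,2,3) _ _ q] by blast
  qed
qed

lemma pump:
  assumes "3 \<le> n" "pt t" "run t cyc = t" "okr t cyc"
  shows "Q n ec w12 w13 w23 t (\<delta> + real k * score w12 w13 w23 t cyc) \<Longrightarrow> Q n ec w12 w13 w23 t \<delta>"
proof (induction k arbitrary: \<delta>)
  case 0 then show ?case by simp
next
  case (Suc k)
  have "Q n ec w12 w13 w23 t (\<delta> + score w12 w13 w23 t cyc)"
  proof (rule Suc.IH)
    have eq: "\<delta> + score w12 w13 w23 t cyc + real k * score w12 w13 w23 t cyc = \<delta> + real (Suc k) * score w12 w13 w23 t cyc"
      by (simp add: algebra_simps)
    show "Q n ec w12 w13 w23 t (\<delta> + score w12 w13 w23 t cyc + real k * score w12 w13 w23 t cyc)"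
      unfolding eq by (rule Suc.prems)
  qed
  then show ?case using run_lemma[OF assms(1,2,4)] assms(3) by simp
qed

lemma sp_Y: "3 \<le> n \<Longrightarrow> sp n x x y = replicate 2 x @ y # replicate (n - 3) 1"
  by (simp add: sp_def numeral_2_eq_2)

lemma Y_lemma:
  assumes "3 \<le> n" "x \<in> {2,3}" "y = 5 - x"
    "LastOK n ec w12 w13 w23 (if even (n-3) then x else y) (if even (n-3) then y else x) (\<delta> + Ch w12 w13 w23 (n-3) 2 x y)"
  shows "Q n ec w12 w13 w23 (x,x,y) \<delta>"
  unfolding Q_def spt.simps
proof (intro allI impI)
  fix l big sm assume l: "l \<noteq> Some (0::nat)" and inv: "sp n x x y ! (n - 1) \<noteq> 1 \<longrightarrow> big"
  have "n - 3 = 0 \<longrightarrow> big" using inv sp_last[OF assms(1), of x x y] assms(1,2,3) by auto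
  then show "W n ec w12 w13 w23 (mk (sp n x x y) l big sm \<delta> True)"
    unfolding sp_Y[OF assms(1)] using chain[of 2 "n-3" n x y l big ec w12 w13 w23 \<delta> sm] assms l by simp
qed

lemma init_Q:
  assumes "3 \<le> n" "Q n ec w12 w13 w23 (1,1,1) 0"
  shows "anh_wins n ec w12 w13 w23"
proof -
  have i: "initial n = mk (spt n (1,1,1)) None False False 0 True"
    using assms(1) by (simp add: initial_def mk_def sp_def replicate_add[symmetric] numeral_3_eq_3 flip: replicate_Suc)
  show ?thesis unfolding anh_wins_def i
    by (rule Qapp[OF assms(2)]) (use assms(1) sp_last[OF assms(1)] in auto)
qed

lemma prefix:
  assumes "x \<in> {2,3}" "y = 5 - x"
  shows "run (1,1,1) [y,x] = (x,x,y)" "okr (1,1,1) [y,x]"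
  using assms by (auto simp: peg_def)

end


lemma D_const: "D w w w (Suc m) a b = w"
  by (induction m arbitrary: a b) (simp_all add: D_one D_Suc weight_const)

lemma Ch_const: "\<And>j x y. 1 \<le> j \<Longrightarrow> Ch w w w k j x y = 0"
proof (induction k)
  case 0 then show ?case by simp
next
  case (Suc k)
  obtain m where "j = Suc m" using Suc.prems by (cases j) auto
  then show ?case using Suc by (simp add: D_const weight_const)
qed

lemma score_const: "score w w w t js = 0"
proof (induction js arbitrary: t)
  case Nil then show ?case by simp
next
  case (Cons j js)
  obtain a b c where "t = (a,b,c)" by (cases t) auto
  then show ?case using Cons by (simp add: weight_const)
qed

lemma weight_simps'[simp]:
  "weight w12 w13 w23 (Suc 0) 2 = w12" "weight w12 w13 w23 2 (Suc 0) = w12"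
  "weight w12 w13 w23 (Suc 0) 3 = w13" "weight w12 w13 w23 3 (Suc 0) = w13"
  using weight_simps[of w12 w13 w23] by simp_all

lemma cycles:
  assumes "x \<in> {2,3}" "y = 5 - x" "\<not> (w12 = w13 \<and> w13 = w23)"
  shows "\<exists>cyc. run (x,x,y) cyc = (x,x,y) \<and> okr (x,x,y) cyc \<and> score w12 w13 w23 (x,x,y) cyc > 0"
proof -
  consider "2*w12 - w13 - w23 > 0" | "2*w13 - w12 - w23 > 0" | "2*w23 - w12 - w13 > 0"
    using assms(3) by linarith
  then show ?thesis
  proof cases
    case 1
    show ?thesis
    proof (cases "x = 2")
      case True
      then show ?thesis using assms 1 by (intro exI[where x="[1,2,1,2,3,1,2]"]) (simp add: peg_def)
    next
      case False
      then show ?thesis using assms 1 by (intro exI[where x="[2,1,2,1,2,1,3]"]) (simp add: peg_def)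
    qed
  next
    case 2
    show ?thesis
    proof (cases "x = 2")
      case True
      then show ?thesis using assms 2 by (intro exI[where x="[3,1,3,1,3,1,2]"]) (simp add: peg_def)
    next
      case False
      then show ?thesis using assms 2 by (intro exI[where x="[1,3,1,3,2,1,3]"]) (simp add: peg_def)
    qed
  next
    case 3
    show ?thesis
    proof (cases "x = 2")
      case True
      then show ?thesis using assms 3 by (intro exI[where x="[3,1,2,3,2,3,2]"]) (simp add: peg_def)
    next
      case False
      then show ?thesis using assms 3 by (intro exI[where x="[2,1,3,2,3,2,3]"]) (simp add: peg_def)
    qed
  qed
qed



context fixes n :: nat and ec :: ending and w12 w13 w23 :: real
begin

lemma win_from:
  assumes n: "3 \<le> n" and x: "x \<in> {2,3}" and y: "y = 5 - x"
    and last: "\<And>\<delta>. 0 < \<delta> + L \<Longrightarrow> LastOK n ec w12 w13 w23 (if even (n-3) then x else y) (if even (n-3) then y else x) \<delta>"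
    and cst: "w12 = w13 \<and> w13 = w23 \<Longrightarrow> L = w12"
    and nd: "\<not> (w12 = w13 \<and> w13 = w23 \<and> w12 \<le> 0)"
  shows "anh_wins n ec w12 w13 w23"
proof -
  let ?S0 = "score w12 w13 w23 (1,1,1) [y,x]"
  let ?Ch = "Ch w12 w13 w23 (n-3) 2 x y"
  have "\<exists>cyc k. run (x,x,y) cyc = (x,x,y) \<and> okr (x,x,y) cyc \<and>
      0 < ?S0 + real k * score w12 w13 w23 (x,x,y) cyc + ?Ch + L"
  proof (cases "w12 = w13 \<and> w13 = w23")
    case True
    then have "?S0 = 0" "?Ch = 0" "L = w12" using score_const[of w12] Ch_const[of 2 w12] cst by (auto simp: weight_const)
    moreover have "0 < w12" using True nd by auto
    ultimately show ?thesis by (intro exI[where x="[]"] exI[where x=0]) simp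
  next
    case False
    obtain cyc where c: "run (x,x,y) cyc = (x,x,y)" "okr (x,x,y) cyc" "score w12 w13 w23 (x,x,y) cyc > 0"
      using cycles[OF x y False] by blast
    obtain k where "- (?S0 + ?Ch + L) < real k * score w12 w13 w23 (x,x,y) cyc"
      using reals_Archimedean3[OF c(3)] by blast
    then show ?thesis using c by (intro exI[where x=cyc] exI[where x=k]) simp
  qed
  then obtain cyc k where c: "run (x,x,y) cyc = (x,x,y)" "okr (x,x,y) cyc"
      "0 < ?S0 + real k * score w12 w13 w23 (x,x,y) cyc + ?Ch + L" by blast
  have pxy: "pt (x,x,y)" using x y by (auto simp: peg_def)
  have "Q n ec w12 w13 w23 (x,x,y) (?S0 + real k * score w12 w13 w23 (x,x,y) cyc)"
    by (rule Y_lemma[OF n x y last]) (use c(3) in simp)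
  then have "Q n ec w12 w13 w23 (x,x,y) ?S0" by (rule pump[OF n pxy c(1,2)])
  then have "Q n ec w12 w13 w23 (1,1,1) 0"
    using run_lemma[OF n _ prefix(2)[OF x y], where \<delta>=0] prefix(1)[OF x y] by (simp add: peg_def)
  then show ?thesis by (rule init_Q[OF n])
qed

lemma parity_pegs:
  assumes "x \<in> {2,3}" "y = 5 - x"
  shows "(if even k then x else y) \<in> {2,3}" "(if even k then y else x) = 5 - (if even k then x else y)"
    "peg (if even k then x else y)" "peg (if even k then y else x)"
    "(if even k then x else y) \<noteq> (if even k then y else x)"
  using assms by (auto simp: peg_def)

lemma win_A:
  assumes n: "3 \<le> n" and x: "x \<in> {2,3}" and y: "y = 5 - x"
    and go: "game_over n ec (replicate n (if even (n-3) then y else x)) True True"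
    and nd: "\<not> (w12 = w13 \<and> w13 = w23 \<and> w12 \<le> 0)"
  shows "anh_wins n ec w12 w13 w23"
proof -
  define b where "b = even (n-3)"
  define xf where "xf = (if b then x else y)"
  define yf where "yf = (if b then y else x)"
  have pp: "peg xf" "peg yf" "xf \<noteq> yf" using x y unfolding xf_def yf_def by (auto simp: peg_def)
  have go': "game_over n ec (replicate n yf) True True" using go unfolding yf_def b_def .
  show ?thesis
  proof (rule win_from[OF n x y, where L="D w12 w13 w23 (n-1) xf yf"])
    fix \<delta> :: real
    assume "0 < \<delta> + D w12 w13 w23 (n-1) xf yf"
    then have "LastOK n ec w12 w13 w23 xf yf \<delta>"
      using lastA[of n xf yf ec \<delta> w12 w13 w23] pp n go' by (simp add: victor_def)
    then show "LastOK n ec w12 w13 w23 (if even (n-3) then x else y) (if even (n-3) then y else x) \<delta>"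
      unfolding b_def[symmetric] xf_def[symmetric] yf_def[symmetric] .
  next
    assume "w12 = w13 \<and> w13 = w23"
    moreover obtain m where "n - 1 = Suc m" using n by (cases "n-1") auto
    ultimately show "D w12 w13 w23 (n-1) xf yf = w12"
      using D_const by simp
  qed (rule nd)
qed

lemma win_B:
  assumes n: "3 \<le> n" and go: "game_over n ec (replicate n 1) True True"
    and nd: "\<not> (w12 = w13 \<and> w13 = w23 \<and> w12 \<le> 0)"
  shows "anh_wins n ec w12 w13 w23"
proof -
  let ?x = "if even (n-3) then 2 else 3::nat"
  let ?y = "if even (n-3) then 3 else 2::nat"
  let ?L = "D w12 w13 w23 (n - 1) ?x 1 - weight w12 w13 w23 ?y ?x + D w12 w13 w23 (n - 1) 1 ?y
        - weight w12 w13 w23 ?x 1 + D w12 w13 w23 (n - 1) ?y 1"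
  show ?thesis
  proof (rule win_from[OF n _ _, where x=2 and y=3 and L="?L"])
    fix \<delta> :: real assume d: "0 < \<delta> + ?L"
    show "LastOK n ec w12 w13 w23 ?x ?y \<delta>"
      by (rule lastB[OF n _ _ go]) (use d in \<open>auto simp: victor_def algebra_simps\<close>)
  next
    assume c: "w12 = w13 \<and> w13 = w23"
    obtain m where "n - 1 = Suc m" using n by (cases "n-1") auto
    then show "?L = w12" using c D_const weight_const by simp
  qed (use nd in simp_all)
qed

end

lemma step_ganh[simp]: "ganh (step n w12 w13 w23 s d j) = (\<not> ganh s)" by (simp add: step_def)
lemma step_gdiff[simp]: "gdiff (step n w12 w13 w23 s d j) = (if ganh s then gdiff s + weight w12 w13 w23 (gpos s ! d) j
    else gdiff s - weight w12 w13 w23 (gpos s ! d) j)" by (simp add: step_def)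

lemma anh_not_win:
  assumes "w \<le> 0"
  shows "wins n ec w w w True s \<Longrightarrow> (ganh s \<longrightarrow> gdiff s = 0) \<Longrightarrow> (\<not> ganh s \<longrightarrow> gdiff s = w) \<Longrightarrow> False"
proof (induction rule: wins.induct)
  case (own_turn s d j)
  then show ?case using assms by (auto simp: weight_const victor_def)
next
  case (opp_turn s)
  then obtain d j where a: "allowed n ec w w w s d j" by blast
  have g: "\<not> ganh s" "gdiff s = w" using opp_turn by auto
  have "(ends_after n ec w w w s d j \<and> victor True (gdiff (step n w w w s d j))) \<or>
           (\<not> ends_after n ec w w w s d j \<and> wins n ec w w w True (step n w w w s d j) \<and>
            ((ganh (step n w w w s d j) \<longrightarrow> gdiff (step n w w w s d j) = 0) \<longrightarrow>
            (\<not> ganh (step n w w w s d j) \<longrightarrow> gdiff (step n w w w s d j) = w) \<longrightarrow> False))"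
    using opp_turn(3) a by blast
  then show ?case using g by (auto simp: weight_const victor_def)
qed

lemma nonending_move:
  assumes "2 \<le> n" "valid n (gpos s)" "allowed n ec w12 w13 w23 s d j"
  shows "\<exists>d' j'. allowed n ec w12 w13 w23 s d' j' \<and> \<not> ends_after n ec w12 w13 w23 s d' j'"
proof (cases "ends_after n ec w12 w13 w23 s d j")
  case False then show ?thesis using assms by blast
next
  case True
  let ?p = "gpos s"
  obtain k where t: "tower n (?p[d := j]) k"
    using True by (auto simp: ends_after_def step_def move_pos_def dest!: game_over_tower)
  have lg: "legal_move n ?p d j" "glast s \<noteq> Some d" using assms(3) by (auto simp: allowed_def)
  have dn: "d < n" using lg by (simp add: legal_move_def)
  have len: "length ?p = n" using assms(2) by (simp add: valid_def)
  have jk: "j = k" using t dn len unfolding tower_def by (metis nth_list_update_eq)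
  have d0: "d = 0"
  proof (rule ccontr)
    assume "d \<noteq> 0"
    then have "?p ! 0 = k" using t assms(1) unfolding tower_def by (metis nth_list_update_neq not_numeral_le_zero gr0I)
    then show False using lg(1) jk assms(1) unfolding legal_move_def by (metis gr0I not_less_zero not_numeral_le_zero)
  qed
  have p1: "?p ! 1 = j" using t assms(1) d0 jk unfolding tower_def by (metis One_nat_def nth_list_update_neq Suc_le_lessD numeral_2_eq_2 zero_neq_one)
  have pg: "peg (?p ! 0)" "peg j" "?p ! 0 \<noteq> j" using assms(1,2) lg(1) d0 by (auto simp: valid_def legal_move_def)
  define j2 where "j2 = 6 - ?p ! 0 - j"
  have j2: "peg j2" "j2 \<noteq> ?p ! 0" "j2 \<noteq> j" using third[OF pg] j2_def by auto
  have nt: "\<not> tower n (?p[0 := j2]) k'" for k'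
  proof
    assume "tower n (?p[0 := j2]) k'"
    then have A: "\<forall>e<n. ?p[0 := j2] ! e = k'" unfolding tower_def .
    have "?p[0 := j2] ! 0 = k'" using spec[OF A, of 0] assms(1) by simp
    moreover have "?p[0 := j2] ! 1 = k'" using spec[OF A, of 1] assms(1) by simp
    ultimately have "j2 = k'" "?p ! 1 = k'" using len assms(1) by auto
    then show False using j2 p1 len assms(1) by auto
  qed
  have "allowed n ec w12 w13 w23 s 0 j2"
    unfolding allowed_def using lg d0 j2 nt assms(1) by (auto simp: legal_0 move_pos_def)
  moreover have "\<not> ends_after n ec w12 w13 w23 s 0 j2"
    using nt by (auto simp: ends_after_def step_def move_pos_def dest!: game_over_tower)
  ultimately show ?thesis by blast
qed

lemma bao_not_win:
  assumes "2 \<le> n"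
  shows "wins n ec w w w False s \<Longrightarrow> valid n (gpos s) \<Longrightarrow> (ganh s \<longrightarrow> gdiff s = 0) \<Longrightarrow> (\<not> ganh s \<longrightarrow> gdiff s = w) \<Longrightarrow> False"
proof (induction rule: wins.induct)
  case (own_turn s d j)
  have v: "valid n (gpos (step n w w w s d j))"
    using own_turn.prems(1) own_turn.hyps(2)
    by (auto simp: valid_def step_def move_pos_def allowed_def legal_move_def nth_list_update)
  show ?case using own_turn v by (auto simp: step_def weight_const victor_def)
next
  case (opp_turn s)
  then obtain d j where "allowed n ec w w w s d j" by blast
  then obtain d' j' where a: "allowed n ec w w w s d' j'" "\<not> ends_after n ec w w w s d' j'"
    using nonending_move[OF assms opp_turn.prems(1)] by blast
  have v: "valid n (gpos (step n w w w s d' j'))"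
    using opp_turn.prems(1) a(1)
    by (auto simp: valid_def step_def move_pos_def allowed_def legal_move_def nth_list_update)
  show ?case using opp_turn a v by (fastforce simp: step_def weight_const victor_def)
qed

theorem theorem4:
  fixes n :: nat and ec :: ending and w12 w13 w23 :: real
  assumes "n \<ge> 3" and "valid_ending ec"
  shows "(\<not> (w12 = w13 \<and> w13 = w23 \<and> w12 \<le> 0) \<longrightarrow> anh_wins n ec w12 w13 w23) \<and>
         ((w12 = w13 \<and> w13 = w23 \<and> w12 \<le> 0) \<longrightarrow> is_draw n ec w12 w13 w23)"
proof (intro conjI impI)
  assume nd: "\<not> (w12 = w13 \<and> w13 = w23 \<and> w12 \<le> 0)"
  show "anh_wins n ec w12 w13 w23"
  proof (cases ec)
    case (EC1 f)
    then have f: "f \<in> {2,3}" using assms(2) by (simp add: valid_ending_def)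
    define b where "b = even (n-3)"
    define x where "x = (if b then 5 - f else f)"
    have x: "x \<in> {2,3}" using f x_def by auto
    have yf: "(if b then 5 - x else x) = f" using f x_def by auto
    have "game_over n ec (replicate n (if even (n-3) then 5 - x else x)) True True"
      unfolding b_def[symmetric] yf by (simp add: EC1 game_over_def tower_def)
    then show ?thesis
      by (rule win_A[OF assms(1) x refl _ nd])
  next
    case EC2
    then show ?thesis by (intro win_B[OF assms(1) _ nd]) (simp add: game_over_def tower_def)
  next
    case EC3
    then show ?thesis by (intro win_B[OF assms(1) _ nd]) (simp add: game_over_def tower_def)
  next
    case EC4
    define b where "b = even (n-3)"
    have "game_over n ec (replicate n (if b then 5 - 2 else 2)) True True"
      by (cases b) (auto simp: EC4 game_over_def tower_def peg_def)
    then show ?thesis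
      by (intro win_A[OF assms(1) _ refl _ nd, where x=2]) (simp_all add: b_def)
  next
    case EC5
    define b where "b = even (n-3)"
    have "game_over n ec (replicate n (if b then 5 - 2 else 2)) True True"
      by (cases b) (auto simp: EC5 game_over_def tower_def peg_def)
    then show ?thesis
      by (intro win_A[OF assms(1) _ refl _ nd, where x=2]) (simp_all add: b_def)
  qed
next
  assume c: "w12 = w13 \<and> w13 = w23 \<and> w12 \<le> 0"
  then have w: "w13 = w12" "w23 = w12" by auto
  have i: "ganh (initial n)" "gdiff (initial n) = 0" "valid n (gpos (initial n))"
    by (auto simp: initial_def valid_def peg_def)
  have "\<not> anh_wins n ec w12 w13 w23"
    unfolding anh_wins_def w using anh_not_win[of w12 n ec "initial n"] c i by blast
  moreover have "\<not> bao_wins n ec w12 w13 w23"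
    unfolding bao_wins_def w using bao_not_win[of n ec w12 "initial n"] assms(1) i by auto
  ultimately show "is_draw n ec w12 w13 w23" by (simp add: is_draw_def)
qed


end
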